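(* Let $(A,B)$ be a nondegenerate pair of integral ternary quadratic forms and $\delta=(\delta_1,\delta_2)\in M_3(\mathbb{Z})\times M_2(\mathbb{Z})$ with $\det\delta_1\ne0$, $\det\delta_2\ne0$. Put $(A',B')=\delta\cdot(A,B)$ and let $\{1,\beta_1,\beta_2,\beta_3\}$ denote the standard basis of $Q(A',B')$ and $\{1,\alpha_1,\alpha_2,\alpha_3\}$ that of $Q(A,B)$. Then there exists an injective ring homomorphism $\psi:Q(A',B')\to Q(A,B)$ with \[ {}^t(\psi(\beta_1),\psi(\beta_2),\psi(\beta_3))\equiv (\det\delta_1)(\det\delta_2)\,\delta_1\,{}^t(\alpha_1,\alpha_2,\alpha_3)\pmod{\mathbb{Z}}. \]
   Context: For a pair $(A,B)$ of integral ternary quadratic forms $A(v)=\sum_{i\le j}a_{ij}v_iv_j$, $B(v)=\sum_{i\le j}b_{ij}v_iv_j$ (with $a_{ji}=a_{ij}$, $b_{ji}=b_{ij}$), put $\lambda^{ij}_{k\ell}=a_{ij}b_{k\ell}-b_{ij}a_{k\ell}$. For a permutation $(i,j,k)$ of $(1,2,3)$ with sign $\pm$, set $c_{ii}^i=\pm\lambda^{ik}_{ij}+C_i$, $c_{ii}^j=\pm\lambda^{ii}_{ik}$, $c_{ij}^i=\pm\tfrac12\lambda^{ik}_{jj}+\tfrac12C_j$, $c_{ij}^k=\pm\lambda^{jj}_{ii}$, where $C_1=\lambda^{23}_{11}$, $C_2=-\lambda^{13}_{22}$, $C_3=\lambda^{12}_{33}$, and $c_{ij}^0=\sum_{r=1}^3(c_{jk}^rc_{ri}^k-c_{ij}^rc_{rk}^k)$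 for any $k\ne i$. The quartic ring $Q(A,B)$ is the free $\mathbb{Z}$-module with basis $\{1,\alpha_1,\alpha_2,\alpha_3\}$ and multiplication $\alpha_i\alpha_j=\sum_{k=0}^3c_{ij}^k\alpha_k$ ($\alpha_0=1$). $(A,B)$ is nondegenerate if the discriminant of the binary cubic form $4\det(u_1A-u_2B)$ is nonzero (identifying forms with half-integral symmetric matrices). The action of $\delta=(\delta_1,\delta_2)$, $\delta_2=\begin{pmatrix}p&q\\ r&s\end{pmatrix}$, is $\delta\cdot(A,B)=(p(\delta_1A)+q(\delta_1B),\,r(\delta_1A)+s(\delta_1B))$ with $(\delta_1A)(v)=A(v\delta_1)$. *)

theory Defs
  imports Complex_Main "HOL-Algebra.Ring"
begin

text \<open>A ternary quadratic form
  A(v) = sum_{i<=j} a_ij v_i v_j is represented by its coefficient function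
  a :: nat => nat => int, of which only the entries a i j with 1 <= i <= j <= 3
  are used; a_ji = a_ij is realised by symc. Matrices are nat => nat => int
  with indices in 1..3 (for delta_1); delta_2 is given by p q r s.\<close>

type_synonym tqf = "nat \<Rightarrow> nat \<Rightarrow> int"

definition symc :: "tqf \<Rightarrow> nat \<Rightarrow> nat \<Rightarrow> int" where
  "symc a i j = (if i \<le> j then a i j else a j i)"

definition qf_eval :: "tqf \<Rightarrow> (nat \<Rightarrow> int) \<Rightarrow> int" where
  "qf_eval a v = (\<Sum>i\<in>{1..3}. \<Sum>j\<in>{i..3}. a i j * v i * v j)"

definition unitv :: "nat \<Rightarrow> nat \<Rightarrow> int" where
  "unitv i = (\<lambda>k. if k = i then 1 else 0)"

definition coef_of :: "((nat \<Rightarrow> int) \<Rightarrow> int) \<Rightarrow> tqf" where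
  "coef_of f i j = (if i = j then f (unitv i)
     else f (\<lambda>k. unitv i k + unitv j k) - f (unitv i) - f (unitv j))"

text \<open>(delta_1 A)(v) = A(v delta_1), v a row vector.\<close>
definition act1 :: "(nat \<Rightarrow> nat \<Rightarrow> int) \<Rightarrow> tqf \<Rightarrow> tqf" where
  "act1 d a = coef_of (\<lambda>v. qf_eval a (\<lambda>k. \<Sum>i\<in>{1..3}. v i * d i k))"

definition act :: "(nat \<Rightarrow> nat \<Rightarrow> int) \<Rightarrow> int \<Rightarrow> int \<Rightarrow> int \<Rightarrow> int \<Rightarrow> tqf \<Rightarrow> tqf \<Rightarrow> tqf \<times> tqf" where
  "act d p q r s A B =
     ((\<lambda>i j. p * act1 d A i j + q * act1 d B i j),
      (\<lambda>i j. r * act1 d A i j + s * act1 d B i j))"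

definition det3 :: "(nat \<Rightarrow> nat \<Rightarrow> 'a::comm_ring_1) \<Rightarrow> 'a" where
  "det3 m = m 1 1 * m 2 2 * m 3 3 + m 1 2 * m 2 3 * m 3 1 + m 1 3 * m 2 1 * m 3 2
          - m 1 3 * m 2 2 * m 3 1 - m 1 2 * m 2 1 * m 3 3 - m 1 1 * m 2 3 * m 3 2"

definition hmat :: "tqf \<Rightarrow> nat \<Rightarrow> nat \<Rightarrow> rat" where
  "hmat a i j = (if i = j then of_int (a i i) else of_int (symc a i j) / 2)"

definition bcubic :: "tqf \<Rightarrow> tqf \<Rightarrow> rat \<Rightarrow> rat \<Rightarrow> rat" where
  "bcubic A B u1 u2 = 4 * det3 (\<lambda>i j. u1 * hmat A i j - u2 * hmat B i j)"

definition cubic_disc :: "(rat \<Rightarrow> rat \<Rightarrow> rat) \<Rightarrow> rat" where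
  "cubic_disc f = (let a = f 1 0; d = f 0 1; s = f 1 1; t = f 1 (-1);
       b = (s - t) / 2 - d; c = (s + t) / 2 - a
     in b^2 * c^2 - 4 * a * c^3 - 4 * b^3 * d - 27 * a^2 * d^2 + 18 * a * b * c * d)"

definition nondegenerate :: "tqf \<Rightarrow> tqf \<Rightarrow> bool" where
  "nondegenerate A B \<longleftrightarrow> cubic_disc (bcubic A B) \<noteq> 0"

definition lam :: "tqf \<Rightarrow> tqf \<Rightarrow> nat \<Rightarrow> nat \<Rightarrow> nat \<Rightarrow> nat \<Rightarrow> int" where
  "lam A B i j k l = symc A i j * symc B k l - symc B i j * symc A k l"

definition Cc :: "tqf \<Rightarrow> tqf \<Rightarrow> nat \<Rightarrow> int" where
  "Cc A B i = (if i = 1 then lam A B 2 3 1 1 else if i = 2 then - lam A B 1 3 2 2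
               else lam A B 1 2 3 3)"

definition psgn :: "nat \<Rightarrow> nat \<Rightarrow> nat \<Rightarrow> int" where
  "psgn i j k = (if (i,j,k) \<in> {(1,2,3),(2,3,1),(3,1,2)} then 1 else -1)"

definition third :: "nat \<Rightarrow> nat \<Rightarrow> nat" where
  "third i j = 6 - i - j"

definition other :: "nat \<Rightarrow> nat" where
  "other i = (if i = 1 then 2 else 1)"

text \<open>Structure constants c_ij^r for i,j,r in {1,2,3}. (The values do not depend
  on the choices of permutation made; halving is exact.)\<close>
definition c3 :: "tqf \<Rightarrow> tqf \<Rightarrow> nat \<Rightarrow> nat \<Rightarrow> nat \<Rightarrow> int" where
  "c3 A B i j r =
    (if i = j then
       (if r = i then (let j' = other i; k' = third i j' in
                        psgn i j' k' * lam A B i k' i j' + Cc A B i)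
        else (let k' = third i r in psgn i r k' * lam A B i i i k'))
     else (let k = third i j in
       if r = i then (psgn i j k * lam A B i k j j + Cc A B j) div 2
       else if r = j then (psgn j i k * lam A B j k i i + Cc A B i) div 2
       else psgn i j k * lam A B j j i i))"

text \<open>c_ij^0, using k = other i (the paper allows any k different from i).\<close>
definition c0 :: "tqf \<Rightarrow> tqf \<Rightarrow> nat \<Rightarrow> nat \<Rightarrow> int" where
  "c0 A B i j = (let k = other i in
     \<Sum>r\<in>{1..3}. c3 A B j k r * c3 A B r i k - c3 A B i j r * c3 A B r k k)"

text \<open>Full multiplication table on the basis alpha_0 = 1, alpha_1, alpha_2, alpha_3.\<close>
definition sc :: "tqf \<Rightarrow> tqf \<Rightarrow> nat \<Rightarrow> nat \<Rightarrow> nat \<Rightarrow> int" where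
  "sc A B i j k =
    (if i = 0 then (if k = j then 1 else 0)
     else if j = 0 then (if k = i then 1 else 0)
     else if k = 0 then c0 A B i j else c3 A B i j k)"

text \<open>Elements of Q(A,B): coordinate vectors x (x k = coefficient of alpha_k,
  x k = 0 for k > 3).\<close>
definition qmult :: "tqf \<Rightarrow> tqf \<Rightarrow> (nat \<Rightarrow> int) \<Rightarrow> (nat \<Rightarrow> int) \<Rightarrow> nat \<Rightarrow> int" where
  "qmult A B x y = (\<lambda>k. if k \<le> 3 then
      (\<Sum>i\<in>{0..3}. \<Sum>j\<in>{0..3}. x i * y j * sc A B i j k) else 0)"

definition QR :: "tqf \<Rightarrow> tqf \<Rightarrow> (nat \<Rightarrow> int) ring" where
  "QR A B = \<lparr>carrier = {x. \<forall>k>3. x k = 0}, mult = qmult A B, one = unitv 0,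
             zero = (\<lambda>k. 0), add = (\<lambda>x y k. x k + y k)\<rparr>"

end

theory Submission
  imports Defs
begin


lemma sum13: "(\<Sum>i\<in>{1..3::nat}. f i) = f 1 + f 2 + f 3"
proof -
  have "{1..3::nat} = {1,2,3}" by auto
  then show ?thesis by (simp add: ac_simps)
qed

lemma sum03: "(\<Sum>i\<in>{0..3::nat}. f i) = f 0 + f 1 + f 2 + f 3"
proof -
  have "{0..3::nat} = {0,1,2,3}" by auto
  then show ?thesis by (simp add: ac_simps)
qed

lemma sum23: "(\<Sum>i\<in>{2..3::nat}. f i) = f 2 + f 3"
proof -
  have "{2..3::nat} = {2,3}" by auto
  then show ?thesis by (simp add: ac_simps)
qed

lemma sum13s: "(\<Sum>i\<in>{Suc 0..3}. f i) = f 1 + f 2 + f 3"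
  using sum13 by simp

lemma sum33: "(\<Sum>i\<in>{3..3::nat}. f i) = f 3"
  by simp

lemma le3_cases: "(i::nat) \<le> 3 \<Longrightarrow> i = 0 \<or> i = 1 \<or> i = 2 \<or> i = 3"
  by auto

lemma qf_eval_ex: "qf_eval a v = a 1 1 * v 1 * v 1 + a 1 2 * v 1 * v 2 + a 1 3 * v 1 * v 3
   + a 2 2 * v 2 * v 2 + a 2 3 * v 2 * v 3 + a 3 3 * v 3 * v 3"
  by (simp add: qf_eval_def sum13 sum13s sum23 algebra_simps)

definition lin :: "(nat \<Rightarrow> int) \<Rightarrow> (nat \<Rightarrow> nat \<Rightarrow> int) \<Rightarrow> (nat \<Rightarrow> int) \<Rightarrow> nat \<Rightarrow> int" where
  "lin n M x = (\<lambda>k. if k = 0 then x 0 + (\<Sum>i\<in>{1..3}. x i * n i)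
      else if k \<le> 3 then (\<Sum>i\<in>{1..3}. x i * M i k) else 0)"

definition MH :: "tqf \<Rightarrow> tqf \<Rightarrow> tqf \<Rightarrow> tqf \<Rightarrow> (nat \<Rightarrow> int) \<Rightarrow> (nat \<Rightarrow> nat \<Rightarrow> int) \<Rightarrow> bool" where
  "MH A' B' A B n M \<longleftrightarrow> (\<forall>x y. lin n M (qmult A' B' x y) = qmult A B (lin n M x) (lin n M y))"

lemma lin_expand: "lin n M x k = (\<Sum>i\<in>{0..3}. x i * lin n M (unitv i) k)"
  by (simp add: lin_def sum03 sum13 sum13s unitv_def)

lemma bil:
  fixes x y :: "nat \<Rightarrow> int"
  shows "(\<Sum>a\<in>S. \<Sum>b\<in>S. (\<Sum>i\<in>I. x i * R i a) * (\<Sum>j\<in>I. y j * R j b) * s a b)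
       = (\<Sum>i\<in>I. \<Sum>j\<in>I. x i * y j * (\<Sum>a\<in>S. \<Sum>b\<in>S. R i a * R j b * s a b))"
proof -
  have "(\<Sum>a\<in>S. \<Sum>b\<in>S. (\<Sum>i\<in>I. x i * R i a) * (\<Sum>j\<in>I. y j * R j b) * s a b)
      = (\<Sum>a\<in>S. \<Sum>b\<in>S. \<Sum>i\<in>I. \<Sum>j\<in>I. x i * y j * (R i a * R j b * s a b))"
    apply (intro sum.cong refl)
    apply (subst sum_product)
    apply (subst sum_distrib_right)
    apply (intro sum.cong refl)
    apply (subst sum_distrib_right)
    apply (intro sum.cong refl)
    by (simp add: mult_ac)
  also have "\<dots> = (\<Sum>a\<in>S. \<Sum>i\<in>I. \<Sum>b\<in>S. \<Sum>j\<in>I. x i * y j * (R i a * R j b * s a b))"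
    by (rule sum.cong[OF refl], rule sum.swap)
  also have "\<dots> = (\<Sum>i\<in>I. \<Sum>a\<in>S. \<Sum>b\<in>S. \<Sum>j\<in>I. x i * y j * (R i a * R j b * s a b))"
    by (rule sum.swap)
  also have "\<dots> = (\<Sum>i\<in>I. \<Sum>a\<in>S. \<Sum>j\<in>I. \<Sum>b\<in>S. x i * y j * (R i a * R j b * s a b))"
    by (intro sum.cong[OF refl] sum.swap)
  also have "\<dots> = (\<Sum>i\<in>I. \<Sum>j\<in>I. \<Sum>a\<in>S. \<Sum>b\<in>S. x i * y j * (R i a * R j b * s a b))"
    by (intro sum.cong[OF refl] sum.swap)
  also have "\<dots> = (\<Sum>i\<in>I. \<Sum>j\<in>I. x i * y j * (\<Sum>a\<in>S. \<Sum>b\<in>S. R i a * R j b * s a b))"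
    by (simp add: sum_distrib_left)
  finally show ?thesis .
qed

lemma qmult_unit: "i \<le> 3 \<Longrightarrow> j \<le> 3 \<Longrightarrow> qmult A B (unitv i) (unitv j) a = (if a \<le> 3 then sc A B i j a else 0)"
  by (auto dest!: le3_cases simp: qmult_def unitv_def sum03 sc_def)

definition BC :: "tqf \<Rightarrow> tqf \<Rightarrow> tqf \<Rightarrow> tqf \<Rightarrow> (nat \<Rightarrow> int) \<Rightarrow> (nat \<Rightarrow> nat \<Rightarrow> int) \<Rightarrow> bool" where
  "BC A' B' A B n M \<longleftrightarrow> (\<forall>i\<in>{1..3}. \<forall>j\<in>{1..3}.
     lin n M (qmult A' B' (unitv i) (unitv j)) = qmult A B (lin n M (unitv i)) (lin n M (unitv j)))"

definition Rv :: "(nat \<Rightarrow> int) \<Rightarrow> (nat \<Rightarrow> nat \<Rightarrow> int) \<Rightarrow> nat \<Rightarrow> nat \<Rightarrow> int" where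
  "Rv n M i a = (if a = 0 then n i else M i a)"

lemma lin_unit0: "lin n M (unitv 0) = unitv 0"
  by (rule ext) (simp add: lin_def unitv_def sum13)

lemma lin_hi: "k > 3 \<Longrightarrow> lin n M x k = 0"
  by (simp add: lin_def)

lemma qmult_one_l: "(\<forall>k>3. y k = 0) \<Longrightarrow> qmult A B (unitv 0) y = y"
  apply (rule ext)
  subgoal for k
    by (cases "k \<le> 3") (auto dest!: le3_cases simp: qmult_def unitv_def sum03 sc_def)
  done

lemma qmult_one_r: "(\<forall>k>3. y k = 0) \<Longrightarrow> qmult A B y (unitv 0) = y"
  apply (rule ext)
  subgoal for k
    by (cases "k \<le> 3") (auto dest!: le3_cases simp: qmult_def unitv_def sum03 sc_def)
  done

lemma qmult_unit0: "j \<le> 3 \<Longrightarrow> qmult A B (unitv 0) (unitv j) = unitv j"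
  by (rule qmult_one_l) (simp add: unitv_def)

lemma qmult_unit0r: "j \<le> 3 \<Longrightarrow> qmult A B (unitv j) (unitv 0) = unitv j"
  by (rule qmult_one_r) (simp add: unitv_def)

lemma BC_all:
  assumes "BC A' B' A B n M" "i \<in> {0..3}" "j \<in> {0..3}"
  shows "lin n M (qmult A' B' (unitv i) (unitv j)) = qmult A B (lin n M (unitv i)) (lin n M (unitv j))"
proof (cases "i = 0")
  case True
  then show ?thesis using assms(3) by (simp add: qmult_unit0 lin_unit0 qmult_one_l lin_hi)
next
  case False
  note i = this
  show ?thesis
  proof (cases "j = 0")
    case True
    then show ?thesis using assms(2) by (simp add: qmult_unit0r lin_unit0 qmult_one_r lin_hi)
  next
    case False
    then show ?thesis using i assms unfolding BC_def by auto
  qed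
qed

lemma BC_MH:
  assumes bc: "BC A' B' A B n M"
  shows "MH A' B' A B n M"
  unfolding MH_def
proof (intro allI ext)
  fix x y :: "nat \<Rightarrow> int" and k :: nat
  define R where "R i = lin n M (unitv i)" for i
  show "lin n M (qmult A' B' x y) k = qmult A B (lin n M x) (lin n M y) k"
  proof (cases "k \<le> 3")
    case False
    then show ?thesis by (simp add: lin_def qmult_def)
  next
    case True
    have L: "lin n M (qmult A' B' x y) k = (\<Sum>a\<in>{0..3}. qmult A' B' x y a * R a k)"
      unfolding R_def by (rule lin_expand)
    also have "\<dots> = (\<Sum>a\<in>{0..3}. (\<Sum>i\<in>{0..3}. \<Sum>j\<in>{0..3}. x i * y j * sc A' B' i j a) * R a k)"
      by (intro sum.cong refl) (simp add: qmult_def)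
    also have "\<dots> = (\<Sum>a\<in>{0..3}. \<Sum>i\<in>{0..3}. \<Sum>j\<in>{0..3}. x i * y j * (sc A' B' i j a * R a k))"
      by (intro sum.cong refl) (simp add: sum_distrib_left sum_distrib_right mult_ac)
    also have "\<dots> = (\<Sum>i\<in>{0..3}. \<Sum>a\<in>{0..3}. \<Sum>j\<in>{0..3}. x i * y j * (sc A' B' i j a * R a k))"
      by (rule sum.swap)
    also have "\<dots> = (\<Sum>i\<in>{0..3}. \<Sum>j\<in>{0..3}. \<Sum>a\<in>{0..3}. x i * y j * (sc A' B' i j a * R a k))"
      by (intro sum.cong refl sum.swap)
    also have "\<dots> = (\<Sum>i\<in>{0..3}. \<Sum>j\<in>{0..3}. x i * y j * (\<Sum>a\<in>{0..3}. qmult A' B' (unitv i) (unitv j) a * R a k))"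
      by (intro sum.cong refl) (simp add: sum_distrib_left qmult_unit)
    also have "\<dots> = (\<Sum>i\<in>{0..3}. \<Sum>j\<in>{0..3}. x i * y j * lin n M (qmult A' B' (unitv i) (unitv j)) k)"
      unfolding R_def by (simp add: lin_expand[symmetric])
    also have "\<dots> = (\<Sum>i\<in>{0..3}. \<Sum>j\<in>{0..3}. x i * y j * qmult A B (R i) (R j) k)"
      unfolding R_def by (intro sum.cong refl) (simp add: BC_all[OF bc])
    also have "\<dots> = (\<Sum>i\<in>{0..3}. \<Sum>j\<in>{0..3}. x i * y j * (\<Sum>a\<in>{0..3}. \<Sum>b\<in>{0..3}. R i a * R j b * sc A B a b k))"
      using True by (simp add: qmult_def)
    also have "\<dots> = (\<Sum>a\<in>{0..3}. \<Sum>b\<in>{0..3}. (\<Sum>i\<in>{0..3}. x i * R i a) * (\<Sum>j\<in>{0..3}. y j * R j b) * sc A B a b k)"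
      by (rule bil[symmetric])
    also have "\<dots> = qmult A B (lin n M x) (lin n M y) k"
      using True unfolding R_def by (simp add: qmult_def lin_expand[symmetric])
    finally show ?thesis .
  qed
qed

definition mm :: "(nat \<Rightarrow> nat \<Rightarrow> int) \<Rightarrow> (nat \<Rightarrow> nat \<Rightarrow> int) \<Rightarrow> nat \<Rightarrow> nat \<Rightarrow> int" where
  "mm d e = (\<lambda>i k. \<Sum>j\<in>{1..3}. d i j * e j k)"

lemma lin_comp: "lin n M (lin n' M' x) = lin (\<lambda>i. n' i + (\<Sum>l\<in>{1..3}. M' i l * n l)) (mm M' M) x"
  apply (rule ext)
  subgoal for k
    by (cases "k \<le> 3") (auto dest!: le3_cases simp: lin_def mm_def sum13 sum13s algebra_simps)
  done

lemma MH_comp: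
  assumes "MH A1 B1 A B n M" "MH A' B' A1 B1 n' M'"
  shows "MH A' B' A B (\<lambda>i. n' i + (\<Sum>l\<in>{1..3}. M' i l * n l)) (mm M' M)"
  unfolding MH_def
proof (intro allI)
  fix x y
  show "lin (\<lambda>i. n' i + (\<Sum>l\<in>{1..3}. M' i l * n l)) (mm M' M) (qmult A' B' x y) =
    qmult A B (lin (\<lambda>i. n' i + (\<Sum>l\<in>{1..3}. M' i l * n l)) (mm M' M) x) (lin (\<lambda>i. n' i + (\<Sum>l\<in>{1..3}. M' i l * n l)) (mm M' M) y)"
    unfolding lin_comp[symmetric] using assms unfolding MH_def by simp
qed

lemma lin_cong: "(\<And>i k. i \<in> {1..3} \<Longrightarrow> k \<in> {1..3} \<Longrightarrow> M i k = M' i k) \<Longrightarrow> lin n M = lin n M'"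
  apply (rule ext)+
  subgoal for x k
    by (cases "k \<le> 3") (auto dest!: le3_cases simp: lin_def sum13 sum13s)
  done

lemma MH_cong: "MH A' B' A B n M \<Longrightarrow> (\<And>i k. i \<in> {1..3} \<Longrightarrow> k \<in> {1..3} \<Longrightarrow> M i k = M' i k) \<Longrightarrow> MH A' B' A B n M'"
  unfolding MH_def using lin_cong by metis

lemma lin_unit: "i \<in> {1..3} \<Longrightarrow> lin n M (unitv i) = (\<lambda>k. if k = 0 then n i else if k \<le> 3 then M i k else 0)"
  by (rule ext) (auto dest!: le3_cases simp: lin_def unitv_def sum13 sum13s)



lemma det_kernel:
  fixes z :: "nat \<Rightarrow> int"
  assumes dt: "det3 M \<noteq> 0"
    and e1: "z 1 * M 1 1 + z 2 * M 2 1 + z 3 * M 3 1 = 0"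
    and e2: "z 1 * M 1 2 + z 2 * M 2 2 + z 3 * M 3 2 = 0"
    and e3: "z 1 * M 1 3 + z 2 * M 2 3 + z 3 * M 3 3 = 0"
  shows "z 1 = 0 \<and> z 2 = 0 \<and> z 3 = 0"
proof -
  have "det3 M * z 1 = (M 2 2 * M 3 3 - M 2 3 * M 3 2) * (z 1 * M 1 1 + z 2 * M 2 1 + z 3 * M 3 1)
     + (M 2 3 * M 3 1 - M 2 1 * M 3 3) * (z 1 * M 1 2 + z 2 * M 2 2 + z 3 * M 3 2)
     + (M 2 1 * M 3 2 - M 2 2 * M 3 1) * (z 1 * M 1 3 + z 2 * M 2 3 + z 3 * M 3 3)"
    unfolding det3_def by (simp add: algebra_simps)
  then have 1: "det3 M * z 1 = 0" using e1 e2 e3 by simp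
  have "det3 M * z 2 = (M 1 3 * M 3 2 - M 1 2 * M 3 3) * (z 1 * M 1 1 + z 2 * M 2 1 + z 3 * M 3 1)
     + (M 1 1 * M 3 3 - M 1 3 * M 3 1) * (z 1 * M 1 2 + z 2 * M 2 2 + z 3 * M 3 2)
     + (M 1 2 * M 3 1 - M 1 1 * M 3 2) * (z 1 * M 1 3 + z 2 * M 2 3 + z 3 * M 3 3)"
    unfolding det3_def by (simp add: algebra_simps)
  then have 2: "det3 M * z 2 = 0" using e1 e2 e3 by simp
  have "det3 M * z 3 = (M 1 2 * M 2 3 - M 1 3 * M 2 2) * (z 1 * M 1 1 + z 2 * M 2 1 + z 3 * M 3 1)
     + (M 1 3 * M 2 1 - M 1 1 * M 2 3) * (z 1 * M 1 2 + z 2 * M 2 2 + z 3 * M 3 2)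
     + (M 1 1 * M 2 2 - M 1 2 * M 2 1) * (z 1 * M 1 3 + z 2 * M 2 3 + z 3 * M 3 3)"
    unfolding det3_def by (simp add: algebra_simps)
  then have 3: "det3 M * z 3 = 0" using e1 e2 e3 by simp
  show ?thesis using 1 2 3 dt by simp
qed

lemma lin_add: "lin n M (\<lambda>k. x k + y k) = (\<lambda>k. lin n M x k + lin n M y k)"
  by (rule ext) (simp add: lin_def sum13 sum13s distrib_right)

lemma lin_inj_aux1:
  assumes "k \<in> {1..3::nat}" "lin n M x k - lin n M y k = 0"
  shows "(x 1 - y 1) * M 1 k + (x 2 - y 2) * M 2 k + (x 3 - y 3) * M 3 k = 0"
proof -
  have "k \<noteq> 0" "k \<le> 3" using assms by auto
  then show ?thesis using assms(2) by (simp add: lin_def sum13 sum13s algebra_simps)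
qed

lemma lin_inj_aux2:
  assumes "lin n M x 0 - lin n M y 0 = 0" "x 1 = y 1" "x 2 = y 2" "x 3 = y 3"
  shows "x 0 = y 0"
  using assms by (simp add: lin_def sum13 sum13s)

lemma MH_hom:
  assumes mh: "MH A' B' A B n M" and dt: "det3 M \<noteq> 0"
  shows "lin n M \<in> ring_hom (QR A' B') (QR A B) \<and> inj_on (lin n M) (carrier (QR A' B'))"
proof
  show "lin n M \<in> ring_hom (QR A' B') (QR A B)"
  proof (rule ring_hom_memI)
    fix x assume "x \<in> carrier (QR A' B')"
    show "lin n M x \<in> carrier (QR A B)" by (simp add: QR_def lin_def)
  next
    fix x y assume "x \<in> carrier (QR A' B')" "y \<in> carrier (QR A' B')"
    show "lin n M (x \<otimes>\<^bsub>QR A' B'\<^esub> y) = lin n M x \<otimes>\<^bsub>QR A B\<^esub> lin n M y"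
      using mh by (simp add: QR_def MH_def)
  next
    fix x y assume "x \<in> carrier (QR A' B')" "y \<in> carrier (QR A' B')"
    show "lin n M (x \<oplus>\<^bsub>QR A' B'\<^esub> y) = lin n M x \<oplus>\<^bsub>QR A B\<^esub> lin n M y"
      by (simp add: QR_def lin_add)
  next
    show "lin n M \<one>\<^bsub>QR A' B'\<^esub> = \<one>\<^bsub>QR A B\<^esub>"
      by (simp add: QR_def lin_unit0)
  qed
next
  show "inj_on (lin n M) (carrier (QR A' B'))"
  proof (rule inj_onI)
    fix x y assume x: "x \<in> carrier (QR A' B')" and y: "y \<in> carrier (QR A' B')"
      and eq: "lin n M x = lin n M y"
    have c: "lin n M x k - lin n M y k = 0" for k using eq by simp
    define z where "z = (\<lambda>k. x k - y k)"
    have e: "z 1 * M 1 k + z 2 * M 2 k + z 3 * M 3 k = 0" if "k \<in> {1..3}" for k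
      unfolding z_def using lin_inj_aux1[OF that c[of k]] .
    have z123: "z 1 = 0 \<and> z 2 = 0 \<and> z 3 = 0"
      by (rule det_kernel[OF dt e e e]) auto
    then have x123: "x 1 = y 1" "x 2 = y 2" "x 3 = y 3" unfolding z_def by auto
    have x0: "x 0 = y 0" by (rule lin_inj_aux2[OF c[of 0] x123])
    show "x = y"
    proof (rule ext)
      fix k show "x k = y k"
      proof (cases "k \<le> 3")
        case True then show ?thesis using x123 x0 by (auto dest!: le3_cases)
      next
        case False then show ?thesis using x y by (simp add: QR_def)
      qed
    qed
  qed
qed


lemma ball13: "(\<forall>i\<in>{1..3::nat}. P i) = (P 1 \<and> P 2 \<and> P 3)"
proof -
  have "{1..3::nat} = {1,2,3}" by auto
  then show ?thesis by simp
qed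

lemma ball03: "(\<forall>i\<in>{0..3::nat}. P i) = (P 0 \<and> P 1 \<and> P 2 \<and> P 3)"
proof -
  have "{0..3::nat} = {0,1,2,3}" by auto
  then show ?thesis by simp
qed

lemma BC_explicit:
  assumes "\<forall>i\<in>{1..3}. \<forall>j\<in>{1..3}. \<forall>k\<in>{0..3}.
     (\<Sum>a\<in>{0..3}. \<Sum>b\<in>{0..3}. Rv n M i a * Rv n M j b * sc A B a b k)
     = (if k = 0 then sc A' B' i j 0 + (\<Sum>l\<in>{1..3}. sc A' B' i j l * n l)
        else (\<Sum>l\<in>{1..3}. sc A' B' i j l * M l k))"
  shows "BC A' B' A B n M"
  unfolding BC_def
proof (intro ballI ext)
  fix i j k assume i: "i \<in> {1..3::nat}" and j: "j \<in> {1..3::nat}"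
  have Ri: "lin n M (unitv i) a = Rv n M i a" if "a \<le> 3" for a
    using i that by (simp add: lin_unit Rv_def)
  have Rj: "lin n M (unitv j) a = Rv n M j a" if "a \<le> 3" for a
    using j that by (simp add: lin_unit Rv_def)
  show "lin n M (qmult A' B' (unitv i) (unitv j)) k = qmult A B (lin n M (unitv i)) (lin n M (unitv j)) k"
  proof (cases "k \<le> 3")
    case False then show ?thesis by (simp add: lin_def qmult_def)
  next
    case True
    have "qmult A B (lin n M (unitv i)) (lin n M (unitv j)) k =
      (\<Sum>a\<in>{0..3}. \<Sum>b\<in>{0..3}. Rv n M i a * Rv n M j b * sc A B a b k)"
      using True by (simp add: qmult_def Ri Rj)
    also have "\<dots> = (if k = 0 then sc A' B' i j 0 + (\<Sum>l\<in>{1..3}. sc A' B' i j l * n l)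
        else (\<Sum>l\<in>{1..3}. sc A' B' i j l * M l k))"
      using assms i j True by auto
    also have "\<dots> = lin n M (qmult A' B' (unitv i) (unitv j)) k"
      using i j True by (auto simp: lin_def qmult_unit)
    finally show ?thesis by simp
  qed
qed




lemmas c3_cf_defs = c3_def psgn_def third_def other_def Cc_def lam_def symc_def Let_def

lemma c3_111 [simp]: "c3 A B 1 1 1 = -(A 1 1)*(B 2 3) - (A 1 2)*(B 1 3) + (A 1 3)*(B 1 2) + (A 2 3)*(B 1 1)"
  by (simp add: c3_cf_defs)

lemma c3_112 [simp]: "c3 A B 1 1 2 = (A 1 1)*(B 1 3) - (A 1 3)*(B 1 1)"
  by (simp add: c3_cf_defs)

lemma c3_113 [simp]: "c3 A B 1 1 3 = -(A 1 1)*(B 1 2) + (A 1 2)*(B 1 1)"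
  by (simp add: c3_cf_defs)

lemma c3_121 [simp]: "c3 A B 1 2 1 = 0"
  by (simp add: c3_cf_defs)

lemma c3_122 [simp]: "c3 A B 1 2 2 = 0"
  by (simp add: c3_cf_defs)

lemma c3_123 [simp]: "c3 A B 1 2 3 = -(A 1 1)*(B 2 2) + (A 2 2)*(B 1 1)"
  by (simp add: c3_cf_defs)

lemma c3_131 [simp]: "c3 A B 1 3 1 = 0"
  by (simp add: c3_cf_defs)

lemma c3_132 [simp]: "c3 A B 1 3 2 = (A 1 1)*(B 3 3) - (A 3 3)*(B 1 1)"
  by (simp add: c3_cf_defs)

lemma c3_133 [simp]: "c3 A B 1 3 3 = -(A 1 1)*(B 2 3) + (A 2 3)*(B 1 1)"
  by (simp add: c3_cf_defs)

lemma c3_211 [simp]: "c3 A B 2 1 1 = 0"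
  by (simp add: c3_cf_defs)

lemma c3_212 [simp]: "c3 A B 2 1 2 = 0"
  by (simp add: c3_cf_defs)

lemma c3_213 [simp]: "c3 A B 2 1 3 = -(A 1 1)*(B 2 2) + (A 2 2)*(B 1 1)"
  by (simp add: c3_cf_defs)

lemma c3_221 [simp]: "c3 A B 2 2 1 = -(A 2 2)*(B 2 3) + (A 2 3)*(B 2 2)"
  by (simp add: c3_cf_defs)

lemma c3_222 [simp]: "c3 A B 2 2 2 = (A 1 2)*(B 2 3) - (A 1 3)*(B 2 2) + (A 2 2)*(B 1 3) - (A 2 3)*(B 1 2)"
  by (simp add: c3_cf_defs)

lemma c3_223 [simp]: "c3 A B 2 2 3 = -(A 1 2)*(B 2 2) + (A 2 2)*(B 1 2)"
  by (simp add: c3_cf_defs)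

lemma c3_231 [simp]: "c3 A B 2 3 1 = -(A 2 2)*(B 3 3) + (A 3 3)*(B 2 2)"
  by (simp add: c3_cf_defs)

lemma c3_232 [simp]: "c3 A B 2 3 2 = (A 1 2)*(B 3 3) - (A 3 3)*(B 1 2)"
  by (simp add: c3_cf_defs)

lemma c3_233 [simp]: "c3 A B 2 3 3 = -(A 1 3)*(B 2 2) + (A 2 2)*(B 1 3)"
  by (simp add: c3_cf_defs)

lemma c3_311 [simp]: "c3 A B 3 1 1 = 0"
  by (simp add: c3_cf_defs)

lemma c3_312 [simp]: "c3 A B 3 1 2 = (A 1 1)*(B 3 3) - (A 3 3)*(B 1 1)"
  by (simp add: c3_cf_defs)

lemma c3_313 [simp]: "c3 A B 3 1 3 = -(A 1 1)*(B 2 3) + (A 2 3)*(B 1 1)"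
  by (simp add: c3_cf_defs)

lemma c3_321 [simp]: "c3 A B 3 2 1 = -(A 2 2)*(B 3 3) + (A 3 3)*(B 2 2)"
  by (simp add: c3_cf_defs)

lemma c3_322 [simp]: "c3 A B 3 2 2 = (A 1 2)*(B 3 3) - (A 3 3)*(B 1 2)"
  by (simp add: c3_cf_defs)

lemma c3_323 [simp]: "c3 A B 3 2 3 = -(A 1 3)*(B 2 2) + (A 2 2)*(B 1 3)"
  by (simp add: c3_cf_defs)

lemma c3_331 [simp]: "c3 A B 3 3 1 = -(A 2 3)*(B 3 3) + (A 3 3)*(B 2 3)"
  by (simp add: c3_cf_defs)

lemma c3_332 [simp]: "c3 A B 3 3 2 = (A 1 3)*(B 3 3) - (A 3 3)*(B 1 3)"
  by (simp add: c3_cf_defs)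

lemma c3_333 [simp]: "c3 A B 3 3 3 = (A 1 2)*(B 3 3) - (A 1 3)*(B 2 3) + (A 2 3)*(B 1 3) - (A 3 3)*(B 1 2)"
  by (simp add: c3_cf_defs)


definition tv :: "nat \<Rightarrow> nat \<Rightarrow> int \<Rightarrow> nat \<Rightarrow> nat \<Rightarrow> int" where
  "tv a b t = (\<lambda>i j. if i = j then 1 else if i = a \<and> j = b then t else 0)"

definition sv :: "nat \<Rightarrow> int \<Rightarrow> nat \<Rightarrow> nat \<Rightarrow> int" where
  "sv a m = (\<lambda>i j. if i = j then (if i = a then m else 1) else 0)"

lemma unit_sum: "i \<in> {1..3} \<Longrightarrow> (\<Sum>l\<in>{1..3}. unitv i l * d l k) = (d i k::int)"
  unfolding unitv_def by (simp add: if_distrib[of "\<lambda>x. x * _"] sum.delta cong: if_cong)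

lemma unit_sum2: "(\<Sum>l\<in>{1..3}. (unitv i l + unitv j l) * d l k) = (\<Sum>l\<in>{1..3}. unitv i l * d l k) + (\<Sum>l\<in>{1..3}. unitv j l * (d l k::int))"
  by (simp add: distrib_right sum.distrib)

lemma act1_ex:
  assumes "i \<in> {1..3}" "j \<in> {1..3}"
  shows "act1 d A i j = (if i = j then qf_eval A (\<lambda>k. d i k)
     else qf_eval A (\<lambda>k. d i k + d j k) - qf_eval A (\<lambda>k. d i k) - qf_eval A (\<lambda>k. d j k))"
  unfolding act1_def coef_of_def unit_sum2 unit_sum[OF assms(1)] unit_sum[OF assms(2)] by simp

lemmas c3_all = c3_111 c3_112 c3_113 c3_121 c3_122 c3_123 c3_131 c3_132 c3_133 c3_211 c3_212 c3_213 c3_221 c3_222 c3_223 c3_231 c3_232 c3_233 c3_311 c3_312 c3_313 c3_321 c3_322 c3_323 c3_331 c3_332 c3_333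
lemmas c3_alls = c3_all[unfolded One_nat_def]

lemmas gsimps = c3_alls One_nat_def sc_def c0_def sum03 sum13 sum13s Rv_def act1_ex qf_eval_ex tv_def sv_def det3_def other_def Let_def





lemma BC_tv12: "BC (act1 (tv 1 2 t) A) (act1 (tv 1 2 t) B) A B (\<lambda>i. if i = 1 then (-(A 1 2)*(B 2 3)*t + (A 1 3)*(B 2 2)*t - (A 2 2)*(B 1 3)*t - (A 2 2)*(B 2 3)*t^2 + (A 2 3)*(B 1 2)*t + (A 2 3)*(B 2 2)*t^2) else if i = 2 then ((A 2 2)*(B 2 3)*t - (A 2 3)*(B 2 2)*t) else ((A 2 2)*(B 3 3)*t - (A 3 3)*(B 2 2)*t)) (\<lambda>i k. det3 (tv 1 2 t) * tv 1 2 t i k)"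
  apply (rule BC_explicit)
  unfolding ball13 ball03
  apply (intro conjI)
  apply (simp_all add: gsimps algebra_simps power2_eq_square)
  done

lemma BC_tv13: "BC (act1 (tv 1 3 t) A) (act1 (tv 1 3 t) B) A B (\<lambda>i. if i = 1 then (-(A 1 2)*(B 3 3)*t + (A 3 3)*(B 1 2)*t) else if i = 2 then ((A 2 2)*(B 3 3)*t - (A 3 3)*(B 2 2)*t) else ((A 2 3)*(B 3 3)*t - (A 3 3)*(B 2 3)*t)) (\<lambda>i k. det3 (tv 1 3 t) * tv 1 3 t i k)"
  apply (rule BC_explicit)
  unfolding ball13 ball03
  apply (intro conjI)
  apply (simp_all add: gsimps algebra_simps power2_eq_square)
  done

lemma BC_tv21: "BC (act1 (tv 2 1 t) A) (act1 (tv 2 1 t) B) A B (\<lambda>i. if i = 1 then (-(A 1 1)*(B 1 3)*t + (A 1 3)*(B 1 1)*t) else if i = 2 then ((A 1 1)*(B 1 3)*t^2 + (A 1 1)*(B 2 3)*t + (A 1 2)*(B 1 3)*t - (A 1 3)*(B 1 1)*t^2 - (A 1 3)*(B 1 2)*t - (A 2 3)*(B 1 1)*t) else ((A 1 1)*(B 3 3)*t - (A 3 3)*(B 1 1)*t)) (\<lambda>i k. det3 (tv 2 1 t) * tv 2 1 t i k)"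
  apply (rule BC_explicit)
  unfolding ball13 ball03
  apply (intro conjI)
  apply (simp_all add: gsimps algebra_simps power2_eq_square)
  done

lemma BC_tv23: "BC (act1 (tv 2 3 t) A) (act1 (tv 2 3 t) B) A B (\<lambda>i. if i = 1 then (-(A 1 1)*(B 3 3)*t + (A 3 3)*(B 1 1)*t) else if i = 2 then (0) else (0)) (\<lambda>i k. det3 (tv 2 3 t) * tv 2 3 t i k)"
  apply (rule BC_explicit)
  unfolding ball13 ball03
  apply (intro conjI)
  apply (simp_all add: gsimps algebra_simps power2_eq_square)
  done

lemma BC_tv31: "BC (act1 (tv 3 1 t) A) (act1 (tv 3 1 t) B) A B (\<lambda>i. if i = 1 then (0) else if i = 2 then (-(A 1 1)*(B 2 2)*t + (A 2 2)*(B 1 1)*t) else (-(A 1 1)*(B 1 2)*t^2 + (A 1 2)*(B 1 1)*t^2 + (A 1 2)*(B 1 3)*t - (A 1 3)*(B 1 2)*t)) (\<lambda>i k. det3 (tv 3 1 t) * tv 3 1 t i k)"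
  apply (rule BC_explicit)
  unfolding ball13 ball03
  apply (intro conjI)
  apply (simp_all add: gsimps algebra_simps power2_eq_square)
  done

lemma BC_tv32: "BC (act1 (tv 3 2 t) A) (act1 (tv 3 2 t) B) A B (\<lambda>i. if i = 1 then (-(A 1 1)*(B 2 2)*t + (A 2 2)*(B 1 1)*t) else if i = 2 then (0) else (0)) (\<lambda>i k. det3 (tv 3 2 t) * tv 3 2 t i k)"
  apply (rule BC_explicit)
  unfolding ball13 ball03
  apply (intro conjI)
  apply (simp_all add: gsimps algebra_simps power2_eq_square)
  done

lemma BC_sv1: "BC (act1 (sv 1 t) A) (act1 (sv 1 t) B) A B (\<lambda>i. 0) (\<lambda>i k. det3 (sv 1 t) * sv 1 t i k)"
  apply (rule BC_explicit)
  unfolding ball13 ball03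
  apply (intro conjI)
  apply (simp_all add: gsimps algebra_simps power2_eq_square)
  done

lemma BC_sv2: "BC (act1 (sv 2 t) A) (act1 (sv 2 t) B) A B (\<lambda>i. 0) (\<lambda>i k. det3 (sv 2 t) * sv 2 t i k)"
  apply (rule BC_explicit)
  unfolding ball13 ball03
  apply (intro conjI)
  apply (simp_all add: gsimps algebra_simps power2_eq_square)
  done

lemma BC_sv3: "BC (act1 (sv 3 t) A) (act1 (sv 3 t) B) A B (\<lambda>i. 0) (\<lambda>i k. det3 (sv 3 t) * sv 3 t i k)"
  apply (rule BC_explicit)
  unfolding ball13 ball03
  apply (intro conjI)
  apply (simp_all add: gsimps algebra_simps power2_eq_square)
  done




definition PP :: "(nat \<Rightarrow> nat \<Rightarrow> int) \<Rightarrow> bool" where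
  "PP d \<longleftrightarrow> (\<forall>A B. \<exists>n. MH (act1 d A) (act1 d B) A B n (\<lambda>i k. det3 d * d i k))"

lemma qf_eval_act1: "qf_eval (act1 e A) w = qf_eval A (\<lambda>k. \<Sum>i\<in>{1..3}. w i * e i k)"
  by (simp add: qf_eval_ex act1_ex sum13 sum13s algebra_simps)

lemma act1_mm: "act1 (mm d e) A = act1 d (act1 e A)"
proof -
  have "(\<lambda>v. qf_eval A (\<lambda>k. \<Sum>i\<in>{1..3}. v i * mm d e i k)) =
        (\<lambda>v. qf_eval (act1 e A) (\<lambda>k. \<Sum>i\<in>{1..3}. v i * d i k))"
  proof (rule ext)
    fix v
    have "(\<lambda>k. \<Sum>i\<in>{1..3}. v i * mm d e i k) = (\<lambda>k. \<Sum>i\<in>{1..3}. (\<Sum>j\<in>{1..3}. v j * d j i) * e i k)"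
      by (rule ext) (simp add: mm_def sum13 sum13s algebra_simps)
    then show "qf_eval A (\<lambda>k. \<Sum>i\<in>{1..3}. v i * mm d e i k) =
        qf_eval (act1 e A) (\<lambda>k. \<Sum>i\<in>{1..3}. v i * d i k)"
      by (simp add: qf_eval_act1)
  qed
  then show ?thesis unfolding act1_def by simp
qed

lemma det3_mm: "det3 (mm d e) = det3 d * det3 (e :: nat \<Rightarrow> nat \<Rightarrow> int)"
  unfolding det3_def mm_def sum13 by (simp add: algebra_simps)

lemma PP_mul:
  assumes pd: "PP d" and pe: "PP e"
  shows "PP (mm d e)"
  unfolding PP_def
proof (intro allI)
  fix A B
  obtain ne where he: "MH (act1 e A) (act1 e B) A B ne (\<lambda>i k. det3 e * e i k)"
    using pe unfolding PP_def by blast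
  obtain nd where hd: "MH (act1 d (act1 e A)) (act1 d (act1 e B)) (act1 e A) (act1 e B) nd (\<lambda>i k. det3 d * d i k)"
    using pd unfolding PP_def by blast
  have c: "MH (act1 d (act1 e A)) (act1 d (act1 e B)) A B
     (\<lambda>i. nd i + (\<Sum>l\<in>{1..3}. det3 d * d i l * ne l)) (mm (\<lambda>i k. det3 d * d i k) (\<lambda>i k. det3 e * e i k))"
    by (rule MH_comp[OF he hd])
  have m: "mm (\<lambda>i k. det3 d * d i k) (\<lambda>i k. det3 e * e i k) = (\<lambda>i k. det3 (mm d e) * mm d e i k)"
    unfolding det3_mm by (intro ext) (simp add: mm_def sum_distrib_left mult_ac)
  show "\<exists>n. MH (act1 (mm d e) A) (act1 (mm d e) B) A B n (\<lambda>i k. det3 (mm d e) * mm d e i k)"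
    using c unfolding m act1_mm by blast
qed

lemma act1_cong: "(\<And>i k. i \<in> {1..3} \<Longrightarrow> k \<in> {1..3} \<Longrightarrow> d i k = d' i k) \<Longrightarrow> act1 d A = act1 d' A"
proof -
  assume h: "\<And>i k. i \<in> {1..3} \<Longrightarrow> k \<in> {1..3} \<Longrightarrow> d i k = d' i k"
  have "(\<lambda>v. qf_eval A (\<lambda>k. \<Sum>i\<in>{1..3}. v i * d i k)) = (\<lambda>v. qf_eval A (\<lambda>k. \<Sum>i\<in>{1..3}. v i * d' i k))"
    by (rule ext) (simp add: qf_eval_ex sum13 h)
  then show ?thesis unfolding act1_def by simp
qed

lemma det3_cong: "(\<And>i k. i \<in> {1..3} \<Longrightarrow> k \<in> {1..3} \<Longrightarrow> d i k = d' i k) \<Longrightarrow> det3 d = det3 d'"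
  unfolding det3_def by simp

lemma PP_cong:
  assumes "PP d" and h: "\<And>i k. i \<in> {1..3} \<Longrightarrow> k \<in> {1..3} \<Longrightarrow> d i k = d' i k"
  shows "PP d'"
  unfolding PP_def
proof (intro allI)
  fix A B
  obtain n where mh: "MH (act1 d A) (act1 d B) A B n (\<lambda>i k. det3 d * d i k)"
    using assms(1) unfolding PP_def by blast
  have e1: "act1 d A = act1 d' A" "act1 d B = act1 d' B" "det3 d = det3 d'"
    by (rule act1_cong, rule h, assumption+)+ (rule det3_cong, rule h, assumption+)
  have "MH (act1 d' A) (act1 d' B) A B n (\<lambda>i k. det3 d' * d i k)"
    using mh unfolding e1 .
  then have "MH (act1 d' A) (act1 d' B) A B n (\<lambda>i k. det3 d' * d' i k)"
    by (rule MH_cong) (simp add: h)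
  then show "\<exists>n. MH (act1 d' A) (act1 d' B) A B n (\<lambda>i k. det3 d' * d' i k)" by blast
qed

lemma mm_tv: "a \<in> {1..3} \<Longrightarrow> b \<in> {1..3} \<Longrightarrow> a \<noteq> b \<Longrightarrow> i \<in> {1..3} \<Longrightarrow>
   mm (tv a b t) d i k = d i k + (if i = a then t * d b k else 0)"
proof -
  assume ab: "a \<in> {1..3}" "b \<in> {1..3}" "a \<noteq> b" and i: "i \<in> {1..3}"
  have "mm (tv a b t) d i k = (\<Sum>j\<in>{1..3}. (if j = i then d j k else 0) + (if j = b then (if i = a then t * d j k else 0) else 0))"
    unfolding mm_def tv_def using ab(3) by (intro sum.cong refl) auto
  also have "\<dots> = (\<Sum>j\<in>{1..3}. (if j = i then d j k else 0)) + (\<Sum>j\<in>{1..3}. (if j = b then (if i = a then t * d j k else 0) else 0))"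
    by (rule sum.distrib)
  also have "\<dots> = d i k + (if i = a then t * d b k else 0)"
    using i ab(2) by (simp add: sum.delta)
  finally show ?thesis .
qed

lemma PP_rowop:
  assumes "PP (mm (tv a b t) d)" "a \<in> {1..3}" "b \<in> {1..3}" "a \<noteq> b" and ptv: "PP (tv a b (-t))"
  shows "PP d"
proof -
  have "PP (mm (tv a b (-t)) (mm (tv a b t) d))" by (rule PP_mul[OF ptv assms(1)])
  then show ?thesis
  proof (rule PP_cong)
    fix i k assume i: "i \<in> {1..3::nat}" and k: "k \<in> {1..3::nat}"
    show "mm (tv a b (- t)) (mm (tv a b t) d) i k = d i k"
      using assms(4) by (simp add: mm_tv[OF assms(2-4) i] mm_tv[OF assms(2-4) assms(3)])
  qed
qed




lemma PP_tv: "a \<in> {1..3} \<Longrightarrow> b \<in> {1..3} \<Longrightarrow> a \<noteq> b \<Longrightarrow> PP (tv a b t)"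
  unfolding PP_def
  by (auto dest!: le3_cases intro: BC_MH[OF BC_tv12] BC_MH[OF BC_tv13] BC_MH[OF BC_tv21]
      BC_MH[OF BC_tv23] BC_MH[OF BC_tv31] BC_MH[OF BC_tv32])

lemma PP_sv: "a \<in> {1..3} \<Longrightarrow> PP (sv a t)"
  unfolding PP_def
  by (auto dest!: le3_cases intro: BC_MH[OF BC_sv1] BC_MH[OF BC_sv2] BC_MH[OF BC_sv3])

lemma mm_sv: "i \<in> {1..3} \<Longrightarrow> mm (sv a m) d i k = (if i = a then m * d i k else d i k)"
proof -
  assume i: "i \<in> {1..3}"
  have "mm (sv a m) d i k = (\<Sum>j\<in>{1..3}. (if j = i then (if i = a then m * d j k else d j k) else 0))"
    unfolding mm_def sv_def by (intro sum.cong refl) auto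
  also have "\<dots> = (if i = a then m * d i k else d i k)"
    using i by (simp add: sum.delta)
  finally show ?thesis .
qed

lemma sv_apply: "sv a m i k = (if i = k then (if i = a then m else 1) else 0)"
  by (simp add: sv_def)

lemma PP_upper:
  assumes "d 2 1 = 0" "d 3 1 = 0" "d 3 2 = 0"
  shows "PP d"
proof -
  let ?G = "mm (sv 3 (d 3 3)) (mm (tv 2 3 (d 2 3)) (mm (sv 2 (d 2 2)) (mm (tv 1 2 (d 1 2)) (mm (tv 1 3 (d 1 3)) (sv 1 (d 1 1))))))"
  have "PP ?G"
    by (intro PP_mul PP_tv PP_sv) auto
  then show ?thesis
  proof (rule PP_cong)
    fix i k assume i: "i \<in> {1..3::nat}" and k: "k \<in> {1..3::nat}"
    have "i = 1 \<or> i = 2 \<or> i = 3" "k = 1 \<or> k = 2 \<or> k = 3" using i k by auto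
    then show "?G i k = d i k"
      using assms by (elim disjE) (simp_all add: mm_tv mm_sv sv_apply)
  qed
qed

lemma euclid:
  fixes Q :: "(nat \<Rightarrow> nat \<Rightarrow> int) \<Rightarrow> bool"
  assumes ab: "a \<in> {1..3}" "b \<in> {1..3}" "a \<noteq> b"
    and H1: "\<And>d t. Q (mm (tv a b t) d) \<Longrightarrow> Q d"
    and H2: "\<And>d t. Q (mm (tv b a t) d) \<Longrightarrow> Q d"
    and H3: "\<And>d. d b c = 0 \<Longrightarrow> Q d"
  shows "Q d"
proof (induction "nat \<bar>d a c\<bar> + nat \<bar>d b c\<bar>" arbitrary: d rule: less_induct)
  case less
  have ba: "b \<noteq> a" using ab(3) by simp
  have ea: "mm (tv a b t) e a c = e a c + t * e b c" "mm (tv a b t) e b c = e b c" for t e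
    using mm_tv[OF ab(1,2,3) ab(1)] mm_tv[OF ab(1,2,3) ab(2)] ab(3) by simp_all
  have eb: "mm (tv b a t) e b c = e b c + t * e a c" "mm (tv b a t) e a c = e a c" for t e
    using mm_tv[OF ab(2,1) ba ab(2)] mm_tv[OF ab(2,1) ba ab(1)] ab(3) by simp_all
  show ?case
  proof (cases "d b c = 0")
    case True then show ?thesis by (rule H3)
  next
    case wnz: False
    show ?thesis
    proof (cases "d a c = 0")
      case True
      have "mm (tv b a (-1)) (mm (tv a b 1) d) b c = 0" using ea eb True by simp
      then have "Q (mm (tv b a (-1)) (mm (tv a b 1) d))" by (rule H3)
      then have "Q (mm (tv a b 1) d)" by (rule H2)
      then show ?thesis by (rule H1)
    next
      case unz: False
      show ?thesis
      proof (cases "\<bar>d a c\<bar> \<le> \<bar>d b c\<bar>")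
        case True
        let ?d = "mm (tv b a (-(d b c div d a c))) d"
        have e1: "?d b c = d b c mod d a c"
          using eb(1)[of "-(d b c div d a c)" d] by (simp add: minus_div_mult_eq_mod[symmetric] algebra_simps)
        have e2: "?d a c = d a c" using eb(2) by simp
        have "\<bar>d b c mod d a c\<bar> < \<bar>d a c\<bar>" by (rule abs_mod_less) (rule unz)
        then have "nat \<bar>?d a c\<bar> + nat \<bar>?d b c\<bar> < nat \<bar>d a c\<bar> + nat \<bar>d b c\<bar>"
          using True unfolding e1 e2 by linarith
        then have "Q ?d" by (rule less.hyps)
        then show ?thesis by (rule H2)
      next
        case False
        let ?d = "mm (tv a b (-(d a c div d b c))) d"
        have e1: "?d a c = d a c mod d b c"
          using ea(1)[of "-(d a c div d b c)" d] by (simp add: minus_div_mult_eq_mod[symmetric] algebra_simps)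
        have e2: "?d b c = d b c" using ea(2) by simp
        have "\<bar>d a c mod d b c\<bar> < \<bar>d b c\<bar>" by (rule abs_mod_less) (rule wnz)
        then have "nat \<bar>?d a c\<bar> + nat \<bar>?d b c\<bar> < nat \<bar>d a c\<bar> + nat \<bar>d b c\<bar>"
          using False unfolding e1 e2 by linarith
        then have "Q ?d" by (rule less.hyps)
        then show ?thesis by (rule H1)
      qed
    qed
  qed
qed

lemma PP_rowop': "PP (mm (tv a b t) d) \<Longrightarrow> a \<in> {1..3} \<Longrightarrow> b \<in> {1..3} \<Longrightarrow> a \<noteq> b \<Longrightarrow> PP d"
  by (rule PP_rowop) (auto intro: PP_tv)

lemma PP_all: "PP d"
proof -
  have Q3: "d 2 1 = 0 \<longrightarrow> d 3 1 = 0 \<longrightarrow> PP d" for d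
  proof (rule euclid[where a=2 and b=3 and c=2])
    fix d t assume h: "mm (tv 2 3 t) d 2 1 = 0 \<longrightarrow> mm (tv 2 3 t) d 3 1 = 0 \<longrightarrow> PP (mm (tv 2 3 t) d)"
    show "d 2 1 = 0 \<longrightarrow> d 3 1 = 0 \<longrightarrow> PP d"
      using h by (auto simp: mm_tv intro: PP_rowop')
  next
    fix d t assume h: "mm (tv 3 2 t) d 2 1 = 0 \<longrightarrow> mm (tv 3 2 t) d 3 1 = 0 \<longrightarrow> PP (mm (tv 3 2 t) d)"
    show "d 2 1 = 0 \<longrightarrow> d 3 1 = 0 \<longrightarrow> PP d"
      using h by (auto simp: mm_tv intro: PP_rowop')
  next
    fix d :: "nat \<Rightarrow> nat \<Rightarrow> int" assume "d 3 2 = 0"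
    then show "d 2 1 = 0 \<longrightarrow> d 3 1 = 0 \<longrightarrow> PP d" using PP_upper by blast
  qed auto
  have Q2: "d 2 1 = 0 \<longrightarrow> PP d" for d
  proof (rule euclid[where a=1 and b=3 and c=1])
    fix d t assume h: "mm (tv 1 3 t) d 2 1 = 0 \<longrightarrow> PP (mm (tv 1 3 t) d)"
    show "d 2 1 = 0 \<longrightarrow> PP d"
      using h by (auto simp: mm_tv intro: PP_rowop')
  next
    fix d t assume h: "mm (tv 3 1 t) d 2 1 = 0 \<longrightarrow> PP (mm (tv 3 1 t) d)"
    show "d 2 1 = 0 \<longrightarrow> PP d"
      using h by (auto simp: mm_tv intro: PP_rowop')
  next
    fix d :: "nat \<Rightarrow> nat \<Rightarrow> int" assume "d 3 1 = 0"
    then show "d 2 1 = 0 \<longrightarrow> PP d" using Q3 by blast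
  qed auto
  show ?thesis
  proof (rule euclid[where a=1 and b=2 and c=1])
    fix d t assume "PP (mm (tv 1 2 t) d)" then show "PP d" by (rule PP_rowop') auto
  next
    fix d t assume "PP (mm (tv 2 1 t) d)" then show "PP d" by (rule PP_rowop') auto
  next
    fix d :: "nat \<Rightarrow> nat \<Rightarrow> int" assume "d 2 1 = 0"
    then show "PP d" using Q2 by blast
  qed auto
qed




lemma symc_lin: "symc (\<lambda>i j. p * X i j + q * Y i j) i j = p * symc X i j + q * symc Y i j"
  by (simp add: symc_def)

lemma lam_lin: "lam (\<lambda>i j. p * X i j + q * Y i j) (\<lambda>i j. r * X i j + s * Y i j) i j k l
   = (p * s - q * r) * lam X Y i j k l"
  by (simp add: lam_def symc_lin algebra_simps)

lemma c3_lin: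
  assumes "i \<in> {1..3}" "j \<in> {1..3}" "k \<in> {1..3}"
  shows "c3 (\<lambda>i j. p * X i j + q * Y i j) (\<lambda>i j. r * X i j + s * Y i j) i j k
   = (p * s - q * r) * c3 X Y i j k"
proof -
  have "i = 1 \<or> i = 2 \<or> i = 3" "j = 1 \<or> j = 2 \<or> j = 3" "k = 1 \<or> k = 2 \<or> k = 3" using assms by auto
  then show ?thesis by (elim disjE) (simp_all add: c3_alls One_nat_def algebra_simps)
qed

lemma c0_lin:
  assumes "i \<in> {1..3}" "j \<in> {1..3}"
  shows "c0 (\<lambda>i j. p * X i j + q * Y i j) (\<lambda>i j. r * X i j + s * Y i j) i j
   = (p * s - q * r)^2 * c0 X Y i j"
proof -
  have o: "other i \<in> {1..3}" by (simp add: other_def)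
  have "c0 (\<lambda>i j. p * X i j + q * Y i j) (\<lambda>i j. r * X i j + s * Y i j) i j
     = (\<Sum>r'\<in>{1..3}. ((p * s - q * r) * c3 X Y j (other i) r') * ((p * s - q * r) * c3 X Y r' i (other i))
        - ((p * s - q * r) * c3 X Y i j r') * ((p * s - q * r) * c3 X Y r' (other i) (other i)))"
    unfolding c0_def Let_def
  proof (intro sum.cong refl)
    fix x assume x: "x \<in> {1..3::nat}"
    show "c3 (\<lambda>i j. p * X i j + q * Y i j) (\<lambda>i j. r * X i j + s * Y i j) j (other i) x *
         c3 (\<lambda>i j. p * X i j + q * Y i j) (\<lambda>i j. r * X i j + s * Y i j) x i (other i) -
         c3 (\<lambda>i j. p * X i j + q * Y i j) (\<lambda>i j. r * X i j + s * Y i j) i j x *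
         c3 (\<lambda>i j. p * X i j + q * Y i j) (\<lambda>i j. r * X i j + s * Y i j) x (other i) (other i) =
         (p * s - q * r) * c3 X Y j (other i) x * ((p * s - q * r) * c3 X Y x i (other i)) -
         (p * s - q * r) * c3 X Y i j x * ((p * s - q * r) * c3 X Y x (other i) (other i))"
      by (simp only: c3_lin[OF assms(2) o x] c3_lin[OF x assms(1) o] c3_lin[OF assms(1,2) x] c3_lin[OF x o o])
  qed
  also have "\<dots> = (p * s - q * r)^2 * c0 X Y i j"
    unfolding c0_def Let_def by (simp add: sum_distrib_left power2_eq_square algebra_simps del: c3_all)
  finally show ?thesis .
qed

lemma BC_d2: "BC (\<lambda>i j. p * X i j + q * Y i j) (\<lambda>i j. r * X i j + s * Y i j) X Y (\<lambda>_. 0)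
   (\<lambda>i k. (p * s - q * r) * (if i = k then 1 else 0))"
  apply (rule BC_explicit)
  unfolding ball13 ball03
  apply (intro conjI)
  apply (simp_all add: sum03 sum13 sum13s Rv_def sc_def c3_lin c0_lin power2_eq_square del: c3_all)
  done

lemma det3_scale: "det3 (\<lambda>i k. c * d i k) = c^3 * det3 (d :: nat \<Rightarrow> nat \<Rightarrow> int)"
  by (simp add: det3_def power3_eq_cube algebra_simps)

lemma mm_diag: "i \<in> {1..3} \<Longrightarrow> mm (\<lambda>i k. D * (if i = k then 1 else 0)) M i k = D * (M i k :: int)"
proof -
  assume "i \<in> {1..3}"
  then have "i = 1 \<or> i = 2 \<or> i = 3" by auto
  then show ?thesis by (elim disjE) (simp_all add: mm_def sum13 sum13s)
qed

theorem proposition5p3: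
  fixes A B :: tqf and d1 :: "nat \<Rightarrow> nat \<Rightarrow> int" and p q r s :: int
  assumes "nondegenerate A B"
    and "det3 d1 \<noteq> 0" and "p * s - q * r \<noteq> 0"
  shows "\<exists>\<psi>. \<psi> \<in> ring_hom (QR (fst (act d1 p q r s A B)) (snd (act d1 p q r s A B))) (QR A B)
           \<and> inj_on \<psi> (carrier (QR (fst (act d1 p q r s A B)) (snd (act d1 p q r s A B))))
           \<and> (\<forall>i\<in>{1..3}. \<exists>n::int. \<psi> (unitv i) =
                 (\<lambda>k. if k = 0 then n
                      else if k \<le> 3 then det3 d1 * (p * s - q * r) * d1 i k else 0))"
proof -
  obtain n1 where mh1: "MH (act1 d1 A) (act1 d1 B) A B n1 (\<lambda>i k. det3 d1 * d1 i k)"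
    using PP_all[of d1] unfolding PP_def by blast
  have f: "fst (act d1 p q r s A B) = (\<lambda>i j. p * act1 d1 A i j + q * act1 d1 B i j)"
          "snd (act d1 p q r s A B) = (\<lambda>i j. r * act1 d1 A i j + s * act1 d1 B i j)"
    by (simp_all add: act_def)
  have mh2: "MH (fst (act d1 p q r s A B)) (snd (act d1 p q r s A B)) (act1 d1 A) (act1 d1 B)
     (\<lambda>_. 0) (\<lambda>i k. (p * s - q * r) * (if i = k then 1 else 0))"
    unfolding f by (rule BC_MH[OF BC_d2])
  define Mf where "Mf = (\<lambda>i k. det3 d1 * (p * s - q * r) * d1 i k)"
  obtain n2 where mh3: "MH (fst (act d1 p q r s A B)) (snd (act d1 p q r s A B)) A B n2
     (mm (\<lambda>i k. (p * s - q * r) * (if i = k then 1 else 0)) (\<lambda>i k. det3 d1 * d1 i k))"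
    using MH_comp[OF mh1 mh2] by blast
  have mh4: "MH (fst (act d1 p q r s A B)) (snd (act d1 p q r s A B)) A B n2 Mf"
    by (rule MH_cong[OF mh3]) (simp add: mm_diag Mf_def)
  have "det3 Mf = (det3 d1 * (p * s - q * r))^3 * det3 d1"
    unfolding Mf_def by (rule det3_scale)
  then have dt: "det3 Mf \<noteq> 0" using assms(2,3) by simp
  note h = MH_hom[OF mh4 dt]
  show ?thesis
  proof (intro exI conjI)
    show "lin n2 Mf \<in> ring_hom (QR (fst (act d1 p q r s A B)) (snd (act d1 p q r s A B))) (QR A B)"
      using h by blast
    show "inj_on (lin n2 Mf) (carrier (QR (fst (act d1 p q r s A B)) (snd (act d1 p q r s A B))))"
      using h by blast
    show "\<forall>i\<in>{1..3}. \<exists>n::int. lin n2 Mf (unitv i) =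
                 (\<lambda>k. if k = 0 then n
                      else if k \<le> 3 then det3 d1 * (p * s - q * r) * d1 i k else 0)"
      by (auto simp: lin_unit Mf_def)
  qed
qed


end
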